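(* (Completeness.) For every formula $\phi$ of the language $\Phi$: if $h\Vdash\phi$ for every history $h$ of every regular epistemic transition system, then $\vdash\phi$.
   Context: Fix a set of agents $\mathcal{A}$. A coalition is a subset of $\mathcal{A}$. The language $\Phi$ is given by $\phi ::= p \mid \neg\phi \mid \phi\to\phi \mid \mathsf{K}_C\phi \mid \mathsf{H}_C\phi$, where $p$ ranges over propositional variables and $C\subseteq\mathcal{A}$; $\bot,\top$ are defined as usual. Axioms: all propositional tautologies of $\Phi$ and (1) Truth: $\mathsf{K}_C\phi\to\phi$; (2) Negative Introspection: $\neg\mathsf{K}_C\phi\to\mathsf{K}_C\neg\mathsf{K}_C\phi$; (3) Distributivity: $\mathsf{K}_C(\phi\to\psi)\to(\mathsf{K}_C\phi\to\mathsf{K}_C\psi)$; (4) Monotonicity: $\mathsf{K}_C\phi\to\mathsf{K}_D\phi$ if $C\subseteq D$; (5) Strategic Positive Introspection: $\mathsf{H}_C\phi\to\mathsf{K}_C\mathsf{H}_C\phi$; (6) Cooperation: $\mathsf{H}_C(\phi\to\psi)\to(\mathsf{H}_D\phi\to\mathsf{H}_{C\cup D}\psi)$ where $C\cap D=\varnothing$; (7) Empty Coalition: $\mathsf{K}_\varnothing\phi\to\mathsf{H}_\varnothing\phi$; (8) Perfect Recall: $\mathsf{H}_D\phi\to\mathsf{H}_D\mathsf{K}_C\phi$ where $D\subseteq C\neq\varnothing$; (9) Unachievability of Falsehood: $\neg\mathsf{H}_C\bot$. $\vdash\phi$ means $\phi$ is derivable from the axioms using Necessitation ($\phi/\mathsf{K}_C\phi$),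 Strategic Necessitation ($\phi/\mathsf{H}_C\phi$) and Modus Ponens. An epistemic transition system is a tuple $(W,\{\sim_a\}_{a\in\mathcal{A}},V,M,\pi)$ with $W$ a set of states, each $\sim_a$ an equivalence relation on $W$, $V$ a nonempty set (domain of choices), $M\subseteq W\times V^{\mathcal{A}}\times W$, and $\pi$ mapping propositional variables to subsets of $W$. It is regular if for every $w\in W$ and $\mathbf{s}\in V^{\mathcal{A}}$ there is $w'$ with $(w,\mathbf{s},w')\in M$. A strategy profile of coalition $C$ is an element of $V^C$; for profiles $\mathbf{s}_1\in V^{C_1},\mathbf{s}_2\in V^{C_2}$ and $C\subseteq C_1\cap C_2$, $\mathbf{s}_1=_C\mathbf{s}_2$ means $(\mathbf{s}_1)_a=(\mathbf{s}_2)_a$ for all $a\in C$. A history is a sequence $(w_0,\mathbf{s}_1,w_1,\dots,\mathbf{s}_n,w_n)$, $n\ge0$, with $w_i\in W$, $\mathbf{s}_i\in V^{\mathcal{A}}$, $(w_i,\mathbf{s}_{i+1},w_{i+1})\in M$ for $i<n$; $hd(h)$ is its last element and $h::\mathbf{s}::w$ denotes extension by $\mathbf{s},w$. For histories $h=(w_0,\mathbf{s}_1,\dots,w_n)$, $h'=(w'_0,\mathbf{s}'_1,\dots,w'_m)$ and agent $a$, $h\approx_a h'$ iff $n=m$, $w_i\sim_a w'_i$ for all $i$, and $(\mathbf{s}_i)_a=(\mathbf{s}'_i)_a$ for all $i$; $h\approx_C h'$ iff $h\approx_a h'$ for all $a\in C$ (so $\approx_\varnothing$ relates any two histories). Satisfaction: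 $h\Vdash p$ iff $hd(h)\in\pi(p)$; Boolean clauses as usual; $h\Vdash\mathsf{K}_C\phi$ iff $h'\Vdash\phi$ for every history $h'$ with $h\approx_C h'$; $h\Vdash\mathsf{H}_C\phi$ iff there is $\mathbf{s}\in V^C$ such that for every history $h'::\mathbf{s}'::w'$ with $h\approx_C h'$ and $\mathbf{s}=_C\mathbf{s}'$ we have $h'::\mathbf{s}'::w'\Vdash\phi$. *)

theory Defs
  imports Main
begin

datatype ('a, 'p) fm =
    Prop 'p
  | Neg "('a, 'p) fm"
  | Imp "('a, 'p) fm" "('a, 'p) fm"
  | K "'a set" "('a, 'p) fm"
  | H "'a set" "('a, 'p) fm"

definition Bot :: "('a, 'p) fm" where
  "Bot = Neg (Imp (Prop undefined) (Prop undefined))"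

fun peval :: "(('a, 'p) fm \<Rightarrow> bool) \<Rightarrow> ('a, 'p) fm \<Rightarrow> bool" where
  "peval g (Neg f) = (\<not> peval g f)"
| "peval g (Imp f1 f2) = (peval g f1 \<longrightarrow> peval g f2)"
| "peval g f = g f"

definition tautology :: "('a, 'p) fm \<Rightarrow> bool" where
  "tautology f = (\<forall>g. peval g f)"

inductive derivable :: "('a, 'p) fm \<Rightarrow> bool" where
  Taut: "tautology f \<Longrightarrow> derivable f"
| Truth: "derivable (Imp (K C f) f)"
| NegIntro: "derivable (Imp (Neg (K C f)) (K C (Neg (K C f))))"
| Distr: "derivable (Imp (K C (Imp f g)) (Imp (K C f) (K C g)))"
| Mono: "C \<subseteq> D \<Longrightarrow> derivable (Imp (K C f) (K D f))"
| StratPosIntro: "derivable (Imp (H C f) (K C (H C f)))"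
| Coop: "C \<inter> D = {} \<Longrightarrow> derivable (Imp (H C (Imp f g)) (Imp (H D f) (H (C \<union> D) g)))"
| EmptyCoal: "derivable (Imp (K {} f) (H {} f))"
| PerfRecall: "D \<subseteq> C \<Longrightarrow> C \<noteq> {} \<Longrightarrow> derivable (Imp (H D f) (H D (K C f)))"
| Unach: "derivable (Neg (H C Bot))"
| Nec: "derivable f \<Longrightarrow> derivable (K C f)"
| SNec: "derivable f \<Longrightarrow> derivable (H C f)"
| MP: "derivable (Imp f g) \<Longrightarrow> derivable f \<Longrightarrow> derivable g"

text \<open>Strategy profiles are total functions on agents; a profile of coalition C is
  any function whose values on C lie in the domain of choices (other values are ignored).\<close>
record ('w, 'a, 'v, 'p) ets =
  St :: "'w set"
  Sim :: "'a \<Rightarrow> ('w \<times> 'w) set"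
  Dom :: "'v set"
  Mech :: "('w \<times> ('a \<Rightarrow> 'v) \<times> 'w) set"
  Val :: "'p \<Rightarrow> 'w set"

definition complete_profiles :: "('w, 'a, 'v, 'p) ets \<Rightarrow> ('a \<Rightarrow> 'v) set" where
  "complete_profiles E = {s. \<forall>a. s a \<in> Dom E}"

definition is_ets :: "('w, 'a, 'v, 'p) ets \<Rightarrow> bool" where
  "is_ets E \<longleftrightarrow>
     (\<forall>a. equiv (St E) (Sim E a)) \<and>
     Dom E \<noteq> {} \<and>
     Mech E \<subseteq> St E \<times> complete_profiles E \<times> St E \<and>
     (\<forall>p. Val E p \<subseteq> St E)"

definition regular :: "('w, 'a, 'v, 'p) ets \<Rightarrow> bool" where
  "regular E \<longleftrightarrow>
     (\<forall>w \<in> St E. \<forall>s \<in> complete_profiles E. \<exists>w'. (w, s, w') \<in> Mech E)"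

text \<open>A history (w0, s1, w1, ..., sn, wn) is represented as (w0, [(s1,w1),...,(sn,wn)]).\<close>
type_synonym ('w, 'a, 'v) hist = "'w \<times> (('a \<Rightarrow> 'v) \<times> 'w) list"

fun steps_ok :: "('w, 'a, 'v, 'p) ets \<Rightarrow> 'w \<Rightarrow> (('a \<Rightarrow> 'v) \<times> 'w) list \<Rightarrow> bool" where
  "steps_ok E w [] = True"
| "steps_ok E w ((s, w') # xs) = ((w, s, w') \<in> Mech E \<and> steps_ok E w' xs)"

definition is_hist :: "('w, 'a, 'v, 'p) ets \<Rightarrow> ('w, 'a, 'v) hist \<Rightarrow> bool" where
  "is_hist E h \<longleftrightarrow> fst h \<in> St E \<and> steps_ok E (fst h) (snd h)"

definition hd_hist :: "('w, 'a, 'v) hist \<Rightarrow> 'w" where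
  "hd_hist h = (if snd h = [] then fst h else snd (last (snd h)))"

definition ext_hist :: "('w, 'a, 'v) hist \<Rightarrow> ('a \<Rightarrow> 'v) \<Rightarrow> 'w \<Rightarrow> ('w, 'a, 'v) hist" where
  "ext_hist h s w = (fst h, snd h @ [(s, w)])"

definition hist_equiv_agent ::
  "('w, 'a, 'v, 'p) ets \<Rightarrow> 'a \<Rightarrow> ('w, 'a, 'v) hist \<Rightarrow> ('w, 'a, 'v) hist \<Rightarrow> bool" where
  "hist_equiv_agent E a h h' \<longleftrightarrow>
     length (snd h) = length (snd h') \<and>
     (fst h, fst h') \<in> Sim E a \<and>
     (\<forall>i < length (snd h). (snd (snd h ! i), snd (snd h' ! i)) \<in> Sim E a) \<and>
     (\<forall>i < length (snd h). fst (snd h ! i) a = fst (snd h' ! i) a)"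

definition hist_equiv ::
  "('w, 'a, 'v, 'p) ets \<Rightarrow> 'a set \<Rightarrow> ('w, 'a, 'v) hist \<Rightarrow> ('w, 'a, 'v) hist \<Rightarrow> bool" where
  "hist_equiv E C h h' \<longleftrightarrow> (\<forall>a \<in> C. hist_equiv_agent E a h h')"

primrec sat :: "('w, 'a, 'v, 'p) ets \<Rightarrow> ('w, 'a, 'v) hist \<Rightarrow> ('a, 'p) fm \<Rightarrow> bool" where
  "sat E h (Prop p) = (hd_hist h \<in> Val E p)"
| "sat E h (Neg f) = (\<not> sat E h f)"
| "sat E h (Imp f g) = (sat E h f \<longrightarrow> sat E h g)"
| "sat E h (K C f) = (\<forall>h'. is_hist E h' \<and> hist_equiv E C h h' \<longrightarrow> sat E h' f)"
| "sat E h (H C f) =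
     (\<exists>s. (\<forall>a \<in> C. s a \<in> Dom E) \<and>
        (\<forall>h' s' w'. is_hist E (ext_hist h' s' w') \<and> hist_equiv E C h h' \<and>
                    (\<forall>a \<in> C. s a = s' a) \<longrightarrow> sat E (ext_hist h' s' w') f))"

text \<open>Since HOL cannot quantify over
  types, states and choices are drawn from fixed, sufficiently large types built from the
  syntax (large enough for the canonical model).\<close>
type_synonym ('a, 'p) univ_state = "('a set \<times> ('a, 'p) fm set) list"

definition valid :: "('a, 'p) fm \<Rightarrow> bool" where
  "valid f \<longleftrightarrow>
     (\<forall>E :: (('a, 'p) univ_state, 'a, ('a, 'p) fm, 'p) ets.
        is_ets E \<and> regular E \<longrightarrow> (\<forall>h. is_hist E h \<longrightarrow> sat E h f))"

end

theory Submission
  imports Defs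
begin

section \<open>Propositional machinery\<close>

fun imps :: "('a,'p) fm list \<Rightarrow> ('a,'p) fm \<Rightarrow> ('a,'p) fm" where
  "imps [] c = c"
| "imps (x # xs) c = Imp x (imps xs c)"

lemma peval_imps: "peval g (imps L c) = ((\<forall>x\<in>set L. peval g x) \<longrightarrow> peval g c)"
  by (induction L) auto

lemma peval_Bot[simp]: "peval g Bot = False"
  by (simp add: Bot_def)

lemma derivable_imps_mp: "derivable (imps As c) \<Longrightarrow> \<forall>a\<in>set As. derivable a \<Longrightarrow> derivable c"
  by (induction As) (auto intro: derivable.MP)

lemma taut_rule:
  assumes "\<And>g. (\<forall>a\<in>set As. peval g a) \<Longrightarrow> peval g c"
    and "\<forall>a\<in>set As. derivable a"
  shows "derivable c"
proof (rule derivable_imps_mp[of As c])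
  show "derivable (imps As c)"
    by (rule derivable.Taut) (use assms(1) in \<open>auto simp: tautology_def peval_imps\<close>)
qed (use assms(2) in auto)

definition consistent :: "('a,'p) fm set \<Rightarrow> bool" where
  "consistent S \<longleftrightarrow> (\<forall>L. set L \<subseteq> S \<longrightarrow> \<not> derivable (imps L Bot))"

definition mcs :: "('a,'p) fm set \<Rightarrow> bool" where
  "mcs X \<longleftrightarrow> consistent X \<and> (\<forall>\<phi>. consistent (insert \<phi> X) \<longrightarrow> \<phi> \<in> X)"

lemma inconsistent_insert:
  assumes "\<not> consistent (insert \<phi> X)"
  shows "\<exists>L. set L \<subseteq> X \<and> derivable (imps L (Neg \<phi>))"
proof -
  obtain L where L: "set L \<subseteq> insert \<phi> X" "derivable (imps L Bot)"
    using assms unfolding consistent_def by blast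
  let ?L = "filter (\<lambda>x. x \<noteq> \<phi>) L"
  have "derivable (imps ?L (Neg \<phi>))"
    by (rule taut_rule[of "[imps L Bot]"]) (use L in \<open>auto simp: peval_imps\<close>)
  moreover have "set ?L \<subseteq> X" using L by auto
  ultimately show ?thesis by blast
qed

lemma witness_consistent:
  assumes "\<not> (\<exists>L. set L \<subseteq> T \<and> derivable (imps L \<phi>))"
  shows "consistent (insert (Neg \<phi>) T)"
  unfolding consistent_def
proof (intro allI impI notI)
  fix L assume L: "set L \<subseteq> insert (Neg \<phi>) T" "derivable (imps L Bot)"
  let ?L = "filter (\<lambda>x. x \<noteq> Neg \<phi>) L"
  have "derivable (imps ?L \<phi>)"
    by (rule taut_rule[of "[imps L Bot]"]) (use L in \<open>auto simp: peval_imps\<close>)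
  moreover have "set ?L \<subseteq> T" using L by auto
  ultimately show False using assms by blast
qed

lemma mcs_derive:
  assumes "mcs X" "set L \<subseteq> X" "derivable (imps L \<phi>)"
  shows "\<phi> \<in> X"
proof (rule ccontr)
  assume "\<phi> \<notin> X"
  then have "\<not> consistent (insert \<phi> X)" using assms(1) unfolding mcs_def by blast
  then obtain L' where L': "set L' \<subseteq> X" "derivable (imps L' (Neg \<phi>))"
    using inconsistent_insert by blast
  have "derivable (imps (L @ L') Bot)"
    by (rule taut_rule[of "[imps L \<phi>, imps L' (Neg \<phi>)]"]) (use L' assms in \<open>auto simp: peval_imps\<close>)
  then show False using assms L' unfolding mcs_def consistent_def by auto
qed

lemma mcs_deriv: "mcs X \<Longrightarrow> derivable \<phi> \<Longrightarrow> \<phi> \<in> X"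
  using mcs_derive[of X "[]"] by auto

lemma mcs_neg: assumes "mcs X" shows "(Neg \<phi> \<in> X) = (\<phi> \<notin> X)"
proof
  assume "Neg \<phi> \<in> X"
  show "\<phi> \<notin> X"
  proof
    assume "\<phi> \<in> X"
    have "derivable (imps [\<phi>, Neg \<phi>] Bot)"
      by (rule taut_rule[of "[]"]) auto
    then show False using assms \<open>\<phi> \<in> X\<close> \<open>Neg \<phi> \<in> X\<close> unfolding mcs_def consistent_def
      by (metis empty_set empty_subsetI insert_subset list.simps(15))
  qed
next
  assume "\<phi> \<notin> X"
  then have "\<not> consistent (insert \<phi> X)" using assms unfolding mcs_def by blast
  then obtain L' where L': "set L' \<subseteq> X" "derivable (imps L' (Neg \<phi>))"
    using inconsistent_insert by blast
  then show "Neg \<phi> \<in> X" using mcs_derive assms by blast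
qed

lemma mcs_imp: assumes "mcs X" shows "(Imp a b \<in> X) = (a \<in> X \<longrightarrow> b \<in> X)"
proof (intro iffI impI)
  assume "Imp a b \<in> X" "a \<in> X"
  moreover have "derivable (imps [Imp a b, a] b)" by (rule taut_rule[of "[]"]) auto
  ultimately show "b \<in> X" using mcs_derive[OF assms, of "[Imp a b, a]"] by auto
next
  assume h: "a \<in> X \<longrightarrow> b \<in> X"
  show "Imp a b \<in> X"
  proof (cases "a \<in> X")
    case True
    then have "b \<in> X" using h by auto
    moreover have "derivable (imps [b] (Imp a b))" by (rule taut_rule[of "[]"]) auto
    ultimately show ?thesis using mcs_derive[OF assms, of "[b]"] by auto
  next
    case False
    then have "Neg a \<in> X" using mcs_neg[OF assms] by auto
    moreover have "derivable (imps [Neg a] (Imp a b))" by (rule taut_rule[of "[]"]) auto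
    ultimately show ?thesis using mcs_derive[OF assms, of "[Neg a]"] by auto
  qed
qed

lemma mcs_mp: "mcs X \<Longrightarrow> Imp a b \<in> X \<Longrightarrow> a \<in> X \<Longrightarrow> b \<in> X"
  using mcs_imp by blast

lemma mcs_imp_deriv: "mcs X \<Longrightarrow> derivable (Imp a b) \<Longrightarrow> a \<in> X \<Longrightarrow> b \<in> X"
  using mcs_mp mcs_deriv by blast

lemma lindenbaum:
  assumes "consistent S"
  shows "\<exists>X. S \<subseteq> X \<and> mcs X"
proof -
  let ?A = "{X. S \<subseteq> X \<and> consistent X}"
  have "\<exists>M\<in>?A. \<forall>X\<in>?A. M \<subseteq> X \<longrightarrow> X = M"
  proof (rule subset_Zorn_nonempty)
    show "?A \<noteq> {}" using assms by blast
  next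
    fix C assume C: "C \<noteq> {}" "subset.chain ?A C"
    have sub: "C \<subseteq> ?A" using C(2) unfolding subset.chain_def by blast
    have "S \<subseteq> \<Union>C" using C sub by blast
    moreover have "consistent (\<Union>C)"
      unfolding consistent_def
    proof (intro allI impI)
      fix L assume "set L \<subseteq> \<Union>C"
      then obtain B where "B \<in> C" "set L \<subseteq> B"
        using finite_subset_Union_chain[OF _ _ C(1) C(2)] by blast
      then show "\<not> derivable (imps L Bot)" using sub unfolding consistent_def by blast
    qed
    ultimately show "\<Union>C \<in> ?A" by blast
  qed
  then obtain M where M: "M \<in> ?A" "\<forall>X\<in>?A. M \<subseteq> X \<longrightarrow> X = M" by blast
  have "mcs M" unfolding mcs_def
  proof (intro conjI allI impI)
    show "consistent M" using M by blast
  next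
    fix \<phi> assume "consistent (insert \<phi> M)"
    then have "insert \<phi> M \<in> ?A" using M by blast
    then show "\<phi> \<in> M" using M by blast
  qed
  then show ?thesis using M by blast
qed


section \<open>Modal facts in maximal consistent sets\<close>

lemma K_T: "mcs X \<Longrightarrow> K C \<phi> \<in> X \<Longrightarrow> \<phi> \<in> X"
  using mcs_mp mcs_deriv derivable.Truth by blast

lemma K_distr: "mcs X \<Longrightarrow> K C (Imp a b) \<in> X \<Longrightarrow> K C a \<in> X \<Longrightarrow> K C b \<in> X"
  using mcs_mp mcs_deriv derivable.Distr by metis

lemma K_imp: "mcs X \<Longrightarrow> derivable (Imp a b) \<Longrightarrow> K C a \<in> X \<Longrightarrow> K C b \<in> X"
  using K_distr mcs_deriv derivable.Nec by metis

lemma K_5: "mcs X \<Longrightarrow> K C \<phi> \<notin> X \<Longrightarrow> K C (Neg (K C \<phi>)) \<in> X"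
  using mcs_mp mcs_deriv derivable.NegIntro mcs_neg by metis

lemma K_mono: "mcs X \<Longrightarrow> K C \<phi> \<in> X \<Longrightarrow> C \<subseteq> D \<Longrightarrow> K D \<phi> \<in> X"
  using mcs_mp mcs_deriv derivable.Mono by metis

lemma K_4: assumes "mcs X" "K C \<phi> \<in> X" shows "K C (K C \<phi>) \<in> X"
proof -
  have "K C (Neg (K C \<phi>)) \<notin> X"
    using K_T[OF assms(1), of C "Neg (K C \<phi>)"] assms mcs_neg by blast
  then have 1: "K C (Neg (K C (Neg (K C \<phi>)))) \<in> X" using K_5[OF assms(1)] by blast
  have "derivable (Imp (Neg (K C (Neg (K C \<phi>)))) (K C \<phi>))"
    by (rule taut_rule[of "[Imp (Neg (K C \<phi>)) (K C (Neg (K C \<phi>)))]"])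
       (auto intro: derivable.NegIntro)
  then show ?thesis using K_imp[OF assms(1) _ 1] by blast
qed

lemma edge_iff:
  assumes "mcs X" "mcs Y" "{\<chi>. K D \<chi> \<in> X} \<subseteq> Y" "C \<subseteq> D"
  shows "(K C \<chi> \<in> X) = (K C \<chi> \<in> Y)"
proof
  assume "K C \<chi> \<in> X"
  then have "K D (K C \<chi>) \<in> X" using K_4 K_mono assms by blast
  then show "K C \<chi> \<in> Y" using assms by blast
next
  assume h: "K C \<chi> \<in> Y"
  show "K C \<chi> \<in> X"
  proof (rule ccontr)
    assume "K C \<chi> \<notin> X"
    then have "K D (Neg (K C \<chi>)) \<in> X" using K_5 K_mono assms by blast
    then have "Neg (K C \<chi>) \<in> Y" using assms by blast
    then show False using h mcs_neg assms by blast
  qed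
qed

lemma H_weak: assumes "mcs X" "H C a \<in> X" "derivable (Imp a b)" shows "H C b \<in> X"
proof -
  have "H {} (Imp a b) \<in> X" using assms derivable.SNec mcs_deriv by blast
  moreover have "derivable (Imp (H {} (Imp a b)) (Imp (H C a) (H ({} \<union> C) b)))"
    by (rule derivable.Coop) auto
  then have "derivable (Imp (H {} (Imp a b)) (Imp (H C a) (H C b)))" by simp
  ultimately show ?thesis using assms mcs_mp mcs_deriv by metis
qed

lemma H_coop: "mcs X \<Longrightarrow> H C (Imp a b) \<in> X \<Longrightarrow> H D a \<in> X \<Longrightarrow> C \<inter> D = {} \<Longrightarrow> H (C \<union> D) b \<in> X"
  using mcs_mp mcs_deriv derivable.Coop by metis

lemma H_mono: assumes "mcs X" "H C a \<in> X" "C \<subseteq> D" shows "H D a \<in> X"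
proof -
  let ?T = "Imp Bot Bot"
  have t: "derivable ?T" by (rule taut_rule[of "[]"]) auto
  have "H C (Imp ?T a) \<in> X"
    by (rule H_weak[OF assms(1,2)]) (rule taut_rule[of "[]"], auto)
  moreover have "H (D - C) ?T \<in> X" using t derivable.SNec mcs_deriv assms by blast
  ultimately have "H (C \<union> (D - C)) a \<in> X" using H_coop assms by blast
  moreover have "C \<union> (D - C) = D" using assms by blast
  ultimately show ?thesis by simp
qed

lemma H_PR: "mcs X \<Longrightarrow> H D a \<in> X \<Longrightarrow> D \<subseteq> C \<Longrightarrow> C \<noteq> {} \<Longrightarrow> H D (K C a) \<in> X"
  using mcs_mp mcs_deriv derivable.PerfRecall by metis

lemma H_SPI: "mcs X \<Longrightarrow> H C a \<in> X \<Longrightarrow> K C (H C a) \<in> X"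
  using mcs_mp mcs_deriv derivable.StratPosIntro by metis

lemma H_Unach: "mcs X \<Longrightarrow> H C Bot \<notin> X"
  using mcs_deriv derivable.Unach mcs_neg by metis

lemma H_empty: "mcs X \<Longrightarrow> K {} a \<in> X \<Longrightarrow> H {} a \<in> X"
  using mcs_mp mcs_deriv derivable.EmptyCoal by metis

lemma K_lift: "derivable (imps L \<phi>) \<Longrightarrow> derivable (imps (map (K C) L) (K C \<phi>))"
proof (induction L arbitrary: \<phi>)
  case Nil
  then show ?case by (simp add: derivable.Nec)
next
  case (Cons x L)
  have "derivable (imps L (Imp x \<phi>))"
    by (rule taut_rule[of "[imps (x # L) \<phi>]"]) (use Cons in \<open>auto simp: peval_imps\<close>)
  then have 1: "derivable (imps (map (K C) L) (K C (Imp x \<phi>)))" using Cons by blast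
  show ?case
    by (rule taut_rule[of "[imps (map (K C) L) (K C (Imp x \<phi>)), Imp (K C (Imp x \<phi>)) (Imp (K C x) (K C \<phi>))]"])
       (use 1 in \<open>auto simp: peval_imps intro: derivable.Distr\<close>)
qed

lemma K_witness:
  assumes "mcs X" "K C \<phi> \<notin> X"
  shows "consistent (insert (Neg \<phi>) {\<chi>. K C \<chi> \<in> X})"
proof (rule witness_consistent, rule notI)
  assume "\<exists>L. set L \<subseteq> {\<chi>. K C \<chi> \<in> X} \<and> derivable (imps L \<phi>)"
  then obtain L where L: "set L \<subseteq> {\<chi>. K C \<chi> \<in> X}" "derivable (imps L \<phi>)" by blast
  have "derivable (imps (map (K C) L) (K C \<phi>))" using K_lift L by blast
  moreover have "set (map (K C) L) \<subseteq> X" using L by auto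
  ultimately show False using mcs_derive assms by blast
qed


section \<open>Combining coalition requirements\<close>

definition kv :: "'a set \<Rightarrow> ('a,'p) fm \<Rightarrow> ('a,'p) fm" where
  "kv D \<psi> = (if D = {} then \<psi> else K D \<psi>)"

definition good :: "('a,'p) fm set \<Rightarrow> ('a \<Rightarrow> ('a,'p) fm) \<Rightarrow> ('a set \<times> ('a,'p) fm) set" where
  "good X s = {(D,\<psi>). H D \<psi> \<in> X \<and> (\<forall>a\<in>D. s a = H D \<psi>)}"

definition req :: "('a,'p) fm set \<Rightarrow> ('a \<Rightarrow> ('a,'p) fm) \<Rightarrow> ('a,'p) fm set" where
  "req X s = (\<lambda>(D,\<psi>). kv D \<psi>) ` good X s"

lemma H_kv: "mcs X \<Longrightarrow> H D \<psi> \<in> X \<Longrightarrow> H D (kv D \<psi>) \<in> X"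
  by (auto simp: kv_def intro: H_PR)

lemma kv_T: "mcs X \<Longrightarrow> kv D \<psi> \<in> X \<Longrightarrow> \<psi> \<in> X"
  by (auto simp: kv_def split: if_splits intro: K_T)

lemma comb_aux:
  assumes "mcs X"
  shows "distinct P \<Longrightarrow> set P \<subseteq> good X s \<Longrightarrow> derivable (imps (map (\<lambda>(D,\<psi>). kv D \<psi>) P) \<phi>)
     \<Longrightarrow> H (\<Union>(fst ` set P)) \<phi> \<in> X"
proof (induction P arbitrary: \<phi>)
  case Nil
  then show ?case using assms derivable.SNec mcs_deriv by fastforce
next
  case (Cons x P)
  obtain D \<psi> where x: "x = (D,\<psi>)" by fastforce
  let ?f = "\<lambda>(D,\<psi>). kv D \<psi>"
  have "derivable (imps (map ?f P) (Imp (kv D \<psi>) \<phi>))"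
    by (rule taut_rule[of "[imps (map ?f (x # P)) \<phi>]"]) (use Cons x in \<open>auto simp: peval_imps\<close>)
  then have 1: "H (\<Union>(fst ` set P)) (Imp (kv D \<psi>) \<phi>) \<in> X" using Cons by auto
  have g: "H D \<psi> \<in> X" "\<forall>a\<in>D. s a = H D \<psi>" using Cons x by (auto simp: good_def)
  have 2: "H D (kv D \<psi>) \<in> X" using H_kv assms g by blast
  have disj: "\<Union>(fst ` set P) \<inter> D = {}"
  proof (rule ccontr)
    assume "\<Union>(fst ` set P) \<inter> D \<noteq> {}"
    then obtain a D' \<psi>' where a: "(D',\<psi>') \<in> set P" "a \<in> D'" "a \<in> D" by force
    then have "s a = H D' \<psi>'" using Cons by (auto simp: good_def)
    then have "(D',\<psi>') = (D,\<psi>)" using g a by auto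
    then show False using Cons x a by auto
  qed
  have "H (\<Union>(fst ` set P) \<union> D) \<phi> \<in> X" using H_coop[OF assms 1 2 disj] .
  then show ?case using x by (simp add: Un_commute)
qed

lemma list_from_image: "set L \<subseteq> f ` A \<Longrightarrow> \<exists>P. set P \<subseteq> A \<and> L = map f P"
proof (induction L)
  case Nil
  then show ?case by auto
next
  case (Cons y L)
  then obtain P where P: "set P \<subseteq> A" "L = map f P" by auto
  obtain x where "x \<in> A" "y = f x" using Cons by auto
  then show ?case using P by (intro exI[of _ "x # P"]) auto
qed

lemma comb:
  assumes "mcs X" "set L \<subseteq> req X s" "derivable (imps L \<phi>)"
  shows "\<exists>U. H U \<phi> \<in> X \<and> U \<subseteq> {a. \<exists>D \<psi>. s a = H D \<psi>}"
proof -
  let ?f = "\<lambda>(D,\<psi>). kv D \<psi>"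
  obtain P where P: "set P \<subseteq> good X s" "L = map ?f P"
    using list_from_image[of L ?f "good X s"] assms(2) unfolding req_def by blast
  let ?Q = "remdups P"
  have "derivable (imps (map ?f ?Q) \<phi>)"
    by (rule taut_rule[of "[imps L \<phi>]"]) (use assms(3) P in \<open>auto simp: peval_imps\<close>)
  then have "H (\<Union>(fst ` set ?Q)) \<phi> \<in> X" using comb_aux[OF assms(1), of ?Q s \<phi>] P by simp
  moreover have "\<Union>(fst ` set ?Q) \<subseteq> {a. \<exists>D \<psi>. s a = H D \<psi>}"
    using P(1) by (force simp: good_def)
  ultimately show ?thesis by blast
qed

lemma req_consistent: "mcs X \<Longrightarrow> consistent (req X s)"
  unfolding consistent_def using comb H_Unach by blast

lemma H_witness:
  assumes "mcs X" "H C \<phi> \<notin> X" "\<forall>a. a \<notin> C \<longrightarrow> s a = Bot"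
  shows "consistent (insert (Neg \<phi>) (req X s))"
proof (rule witness_consistent, rule notI)
  assume "\<exists>L. set L \<subseteq> req X s \<and> derivable (imps L \<phi>)"
  then obtain U where U: "H U \<phi> \<in> X" "U \<subseteq> {a. \<exists>D \<psi>. s a = H D \<psi>}"
    using comb assms(1) by blast
  have "U \<subseteq> C"
  proof
    fix a assume "a \<in> U"
    then obtain D \<psi> where e: "s a = H D \<psi>" using U by blast
    show "a \<in> C"
    proof (rule ccontr)
      assume "a \<notin> C"
      then have "s a = Bot" using assms(3) by blast
      then show False using e by (simp add: Bot_def)
    qed
  qed
  then show False using H_mono assms U by blast
qed


section \<open>Canonical states\<close>

type_synonym ('a,'p) st = "('a set \<times> ('a,'p) fm set) list"

definition lab :: "('a,'p) st \<Rightarrow> ('a,'p) fm set" where "lab w = snd (last w)"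

inductive_set Wc :: "('a,'p) fm set \<Rightarrow> ('a,'p) st set" for R where
  root: "[({}, R)] \<in> Wc R"
| ext: "w \<in> Wc R \<Longrightarrow> mcs Y \<Longrightarrow> {\<chi>. K C \<chi> \<in> lab w} \<subseteq> Y \<Longrightarrow> w @ [(C,Y)] \<in> Wc R"

lemma Wc_mcs': "w \<in> Wc R \<Longrightarrow> mcs R \<Longrightarrow> mcs (lab w)"
  by (induction rule: Wc.induct) (auto simp: lab_def)

lemma Wc_mcs: "mcs R \<Longrightarrow> w \<in> Wc R \<Longrightarrow> mcs (lab w)"
  using Wc_mcs' by blast

lemma Wc_ne: "w \<in> Wc R \<Longrightarrow> w \<noteq> []"
  by (induction rule: Wc.induct) auto

lemma Wc_hd: "w \<in> Wc R \<Longrightarrow> \<exists>u. w = [({},R)] @ u"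
  by (induction rule: Wc.induct) auto

lemma Wc_path:
  assumes "mcs R" "w \<in> Wc R"
  shows "w = p @ u \<Longrightarrow> p \<noteq> [] \<Longrightarrow> \<forall>x\<in>set u. C \<subseteq> fst x
     \<Longrightarrow> p \<in> Wc R \<and> (K C \<chi> \<in> lab p \<longleftrightarrow> K C \<chi> \<in> lab w)"
  using assms(2)
proof (induction arbitrary: u rule: Wc.induct)
  case root
  then have "u = []" by (cases p) auto
  then show ?case using root Wc.root by auto
next
  case (ext w Y D)
  show ?case
  proof (cases u rule: rev_exhaust)
    case Nil
    then have "p = w @ [(D,Y)]" using ext by simp
    then show ?thesis using Wc.ext[OF ext.hyps] by simp
  next
    case (snoc u0 x)
    then have e: "w = p @ u0" "x = (D,Y)" using ext by auto
    have "C \<subseteq> D" using ext snoc e by auto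
    have ih: "p \<in> Wc R \<and> (K C \<chi> \<in> lab p \<longleftrightarrow> K C \<chi> \<in> lab w)" using ext snoc e by auto
    have "(K C \<chi> \<in> lab w) = (K C \<chi> \<in> Y)"
      by (rule edge_iff) (use ext Wc_mcs[OF assms(1)] \<open>C \<subseteq> D\<close> in auto)
    then show ?thesis using ih by (simp add: lab_def)
  qed
qed

lemma K_empty_global: "mcs R \<Longrightarrow> w \<in> Wc R \<Longrightarrow> (K {} \<chi> \<in> lab w) = (K {} \<chi> \<in> R)"
  using Wc_hd[of w R] Wc_path[of R w "[({},R)]" _ "{}" \<chi>] by (auto simp: lab_def)

definition simc :: "('a,'p) fm set \<Rightarrow> 'a \<Rightarrow> (('a,'p) st \<times> ('a,'p) st) set" where
  "simc R a = {(w,w'). w \<in> Wc R \<and> w' \<in> Wc R \<and> (\<exists>p u u'. p \<noteq> [] \<and> w = p @ u \<and> w' = p @ u' \<and>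
      (\<forall>x\<in>set u. a \<in> fst x) \<and> (\<forall>x\<in>set u'. a \<in> fst x))}"

lemma simc_refl:
  assumes "w \<in> Wc R" shows "(w,w) \<in> simc R a"
proof -
  have "w \<noteq> []" using Wc_ne assms by blast
  then have "\<exists>p u u'. p \<noteq> [] \<and> w = p @ u \<and> w = p @ u' \<and>
      (\<forall>x\<in>set u. a \<in> fst x) \<and> (\<forall>x\<in>set u'. a \<in> fst x)"
    by (intro exI[of _ w] exI[of _ "[]"]) simp
  then show ?thesis using assms unfolding simc_def by blast
qed

lemma simc_equiv: "equiv (Wc R) (simc R a)"
proof (rule equivI)
  show "simc R a \<subseteq> Wc R \<times> Wc R" by (auto simp: simc_def)
  show "refl_on (Wc R) (simc R a)" unfolding refl_on_def by (intro ballI simc_refl)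
  show "sym (simc R a)" unfolding sym_def simc_def by blast
  show "trans (simc R a)" unfolding trans_def
  proof (intro allI impI)
    fix w1 w2 w3 assume a: "(w1,w2) \<in> simc R a" "(w2,w3) \<in> simc R a"
    obtain p u u' where 1: "p \<noteq> []" "w1 = p @ u" "w2 = p @ u'" "\<forall>x\<in>set u. a \<in> fst x" "\<forall>x\<in>set u'. a \<in> fst x"
      using a(1) unfolding simc_def by blast
    obtain q v v' where 2: "q \<noteq> []" "w2 = q @ v" "w3 = q @ v'" "\<forall>x\<in>set v. a \<in> fst x" "\<forall>x\<in>set v'. a \<in> fst x"
      using a(2) unfolding simc_def by blast
    have m: "w1 \<in> Wc R" "w3 \<in> Wc R" using a unfolding simc_def by auto
    have "p @ u' = q @ v" using 1 2 by simp
    then obtain us where "(p = q @ us \<and> us @ u' = v) \<or> (p @ us = q \<and> u' = us @ v)"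
      unfolding append_eq_append_conv2 by blast
    then show "(w1,w3) \<in> simc R a"
    proof
      assume h: "p = q @ us \<and> us @ u' = v"
      have "q \<noteq> [] \<and> w1 = q @ (us @ u) \<and> w3 = q @ v' \<and> (\<forall>x\<in>set (us @ u). a \<in> fst x) \<and> (\<forall>x\<in>set v'. a \<in> fst x)"
        using 1 2 h by auto
      then show ?thesis unfolding simc_def using m by blast
    next
      assume h: "p @ us = q \<and> u' = us @ v"
      have "p \<noteq> [] \<and> w1 = p @ u \<and> w3 = p @ (us @ v') \<and> (\<forall>x\<in>set u. a \<in> fst x) \<and> (\<forall>x\<in>set (us @ v'). a \<in> fst x)"
        using 1 2 h by auto
      then show ?thesis unfolding simc_def using m by blast
    qed
  qed
qed

lemma tree_K:
  assumes "mcs R" "C \<noteq> {}" "\<forall>a\<in>C. (w,w') \<in> simc R a" "K C \<chi> \<in> lab w"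
  shows "K C \<chi> \<in> lab w'"
proof -
  let ?P = "\<lambda>a n. 0 < n \<and> n \<le> length w \<and> take n w = take n w' \<and>
      (\<forall>x\<in>set (drop n w). a \<in> fst x) \<and> (\<forall>x\<in>set (drop n w'). a \<in> fst x)"
  have "\<forall>a\<in>C. \<exists>n. ?P a n"
  proof
    fix a assume "a \<in> C"
    then obtain p u u' where 1: "p \<noteq> []" "w = p @ u" "w' = p @ u'" "\<forall>x\<in>set u. a \<in> fst x" "\<forall>x\<in>set u'. a \<in> fst x"
      using assms(3) unfolding simc_def by blast
    show "\<exists>n. ?P a n" using 1 by (intro exI[of _ "length p"]) auto
  qed
  then obtain nf where nf: "\<forall>a\<in>C. ?P a (nf a)" by metis
  let ?N = "Max (nf ` C)"
  have fin: "finite (nf ` C)"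
    by (rule finite_subset[of _ "{..length w}"]) (use nf in auto)
  have "?N \<in> nf ` C" using Max_in[OF fin] assms(2) by auto
  then obtain a0 where a0: "a0 \<in> C" "nf a0 = ?N" by (metis imageE)
  have le: "\<forall>a\<in>C. nf a \<le> ?N" using Max_ge[OF fin] by blast
  have dw: "\<forall>x\<in>set (drop ?N w). C \<subseteq> fst x"
  proof (intro ballI subsetI)
    fix x a assume "x \<in> set (drop ?N w)" "a \<in> C"
    then have "x \<in> set (drop (nf a) w)" using set_drop_subset_set_drop[of "nf a" ?N w] le by auto
    then show "a \<in> fst x" using nf \<open>a \<in> C\<close> by blast
  qed
  have dw': "\<forall>x\<in>set (drop ?N w'). C \<subseteq> fst x"
  proof (intro ballI subsetI)
    fix x a assume "x \<in> set (drop ?N w')" "a \<in> C"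
    then have "x \<in> set (drop (nf a) w')" using set_drop_subset_set_drop[of "nf a" ?N w'] le by auto
    then show "a \<in> fst x" using nf \<open>a \<in> C\<close> by blast
  qed
  let ?p = "take ?N w"
  have pn: "?p \<noteq> []" using nf a0 by (metis Nat.not_less0 length_0_conv take_eq_Nil2 not_le)
  have w1: "w = ?p @ drop ?N w" by simp
  have w2: "w' = ?p @ drop ?N w'" using nf a0 by (metis append_take_drop_id)
  have ww: "w \<in> Wc R" "w' \<in> Wc R" using assms(2,3) unfolding simc_def by auto
  have "(K C \<chi> \<in> lab ?p) = (K C \<chi> \<in> lab w)" using Wc_path[OF assms(1) ww(1) w1 pn dw] by blast
  moreover have "(K C \<chi> \<in> lab ?p) = (K C \<chi> \<in> lab w')" using Wc_path[OF assms(1) ww(2) w2 pn dw'] by blast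
  ultimately show ?thesis using assms(4) by blast
qed


section \<open>Canonical model\<close>

definition mechc :: "('a,'p) fm set \<Rightarrow> (('a,'p) st \<times> ('a \<Rightarrow> ('a,'p) fm) \<times> ('a,'p) st) set" where
  "mechc R = {(w,s,w'). w \<in> Wc R \<and> w' \<in> Wc R \<and> req (lab w) s \<subseteq> lab w'}"

definition canon :: "('a,'p) fm set \<Rightarrow> (('a,'p) univ_state, 'a, ('a,'p) fm, 'p) ets" where
  "canon R = \<lparr>St = Wc R, Sim = simc R, Dom = UNIV, Mech = mechc R,
              Val = (\<lambda>p. {w \<in> Wc R. Prop p \<in> lab w})\<rparr>"

lemma canon_simps[simp]:
  "St (canon R) = Wc R" "Sim (canon R) = simc R" "Dom (canon R) = UNIV" "Mech (canon R) = mechc R"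
  "Val (canon R) = (\<lambda>p. {w \<in> Wc R. Prop p \<in> lab w})"
  by (simp_all add: canon_def)

lemma lab_simps[simp]: "lab (w @ [(C,Y)]) = Y" "lab [(C,Y)] = Y" "lab [(C,Y),(D,Z)] = Z"
  by (simp_all add: lab_def)

lemma reach:
  assumes "mcs R" "w \<in> Wc R" "mcs Y" "req (lab w) s \<subseteq> Y"
  shows "[({},R),({},Y)] \<in> Wc R \<and> (w, s, [({},R),({},Y)]) \<in> mechc R"
proof -
  have "{\<chi>. K {} \<chi> \<in> lab [({},R)]} \<subseteq> Y"
  proof
    fix \<chi> assume "\<chi> \<in> {\<chi>. K {} \<chi> \<in> lab [({},R)]}"
    then have "K {} \<chi> \<in> lab w" using K_empty_global[OF assms(1,2)] by simp
    then have "H {} \<chi> \<in> lab w" using H_empty Wc_mcs assms by blast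
    then have "({},\<chi>) \<in> good (lab w) s" by (simp add: good_def)
    then have "kv {} \<chi> \<in> req (lab w) s" unfolding req_def by force
    then show "\<chi> \<in> Y" using assms by (simp add: kv_def subset_iff)
  qed
  then have "[({},R)] @ [({},Y)] \<in> Wc R" using Wc.ext[OF Wc.root] assms by blast
  then show ?thesis using assms unfolding mechc_def by simp
qed

lemma canon_ets: "mcs R \<Longrightarrow> is_ets (canon R)"
  unfolding is_ets_def complete_profiles_def
  by (auto simp: simc_equiv mechc_def)

lemma canon_regular: assumes "mcs R" shows "regular (canon R)"
  unfolding regular_def
proof (intro ballI)
  fix w s assume w: "w \<in> St (canon R)"
  then have "mcs (lab w)" using Wc_mcs assms by simp
  then obtain Y where Y: "req (lab w) s \<subseteq> Y" "mcs Y" using req_consistent lindenbaum by blast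
  have "w \<in> Wc R" using w by simp
  then have "(w, s, [({},R),({},Y)]) \<in> mechc R" using reach[OF assms _ Y(2) Y(1)] by blast
  then show "\<exists>w'. (w, s, w') \<in> Mech (canon R)" by auto
qed

section \<open>Histories\<close>

lemma hd_hist_Nil[simp]: "hd_hist (w, []) = w"
  by (simp add: hd_hist_def)

lemma hd_hist_Cons: "hd_hist (w, x # xs) = hd_hist (snd x, xs)"
  by (cases xs) (auto simp: hd_hist_def)

lemma steps_ok_append:
  "steps_ok E w (xs @ ys) = (steps_ok E w xs \<and> steps_ok E (hd_hist (w,xs)) ys)"
proof (induction xs arbitrary: w)
  case Nil
  then show ?case by simp
next
  case (Cons x xs)
  obtain s w' where "x = (s,w')" by fastforce
  then show ?case using Cons by (simp add: hd_hist_Cons)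
qed

lemma hd_hist_ext[simp]: "hd_hist (ext_hist h s w) = w"
  by (simp add: hd_hist_def ext_hist_def)

lemma is_hist_ext: "is_hist E (ext_hist h s w) = (is_hist E h \<and> (hd_hist h, s, w) \<in> Mech E)"
  by (simp add: is_hist_def ext_hist_def steps_ok_append)

lemma steps_ok_states:
  "Mech E \<subseteq> St E \<times> UNIV \<times> St E \<Longrightarrow> steps_ok E w xs \<Longrightarrow> \<forall>x\<in>set xs. snd x \<in> St E"
proof (induction xs arbitrary: w)
  case Nil
  then show ?case by simp
next
  case (Cons x xs)
  obtain s w' where "x = (s,w')" by fastforce
  then show ?case using Cons by auto
qed

lemma mechc_sub: "Mech (canon R) \<subseteq> St (canon R) \<times> UNIV \<times> St (canon R)"
  by (auto simp: mechc_def)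

lemma hist_states:
  assumes "is_hist (canon R) h"
  shows "fst h \<in> Wc R" "\<forall>x\<in>set (snd h). snd x \<in> Wc R" "hd_hist h \<in> Wc R"
proof -
  show 1: "fst h \<in> Wc R" using assms by (simp add: is_hist_def)
  show 2: "\<forall>x\<in>set (snd h). snd x \<in> Wc R"
    using steps_ok_states[OF mechc_sub, of R "fst h" "snd h"] assms by (simp add: is_hist_def)
  show "hd_hist h \<in> Wc R"
    using 1 2 by (cases "snd h = []") (auto simp: hd_hist_def)
qed

lemma hist_equiv_refl:
  assumes "is_hist (canon R) h" shows "hist_equiv (canon R) C h h"
  unfolding hist_equiv_def hist_equiv_agent_def
  using hist_states[OF assms] by (auto intro!: simc_refl)

lemma last_sim:
  assumes "hist_equiv_agent E a h h'"
  shows "(hd_hist h, hd_hist h') \<in> Sim E a"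
proof (cases "snd h = []")
  case True
  then show ?thesis using assms by (simp add: hist_equiv_agent_def hd_hist_def)
next
  case False
  let ?n = "length (snd h) - 1"
  have l: "length (snd h') = length (snd h)" using assms by (simp add: hist_equiv_agent_def)
  then have "snd h' \<noteq> []" using False by auto
  moreover have "?n < length (snd h)" using False by simp
  ultimately show ?thesis using assms False l
    by (simp add: hist_equiv_agent_def hd_hist_def last_conv_nth)
qed

lemma K_fwd:
  assumes "mcs R" "is_hist (canon R) h" "is_hist (canon R) h'" "hist_equiv (canon R) C h h'"
    "K C \<chi> \<in> lab (hd_hist h)"
  shows "\<chi> \<in> lab (hd_hist h')"
proof -
  have m: "mcs (lab (hd_hist h'))" using Wc_mcs hist_states assms by blast
  have "K C \<chi> \<in> lab (hd_hist h')"
  proof (cases "C = {}")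
    case True
    then show ?thesis using K_empty_global hist_states assms by blast
  next
    case False
    have "\<forall>a\<in>C. (hd_hist h, hd_hist h') \<in> simc R a"
      using last_sim assms(4) unfolding hist_equiv_def by fastforce
    then show ?thesis using tree_K assms False by blast
  qed
  then show ?thesis using K_T m by blast
qed


section \<open>Truth lemma\<close>

lemma K_back:
  assumes R: "mcs R" and h: "is_hist (canon R) h" and nK: "K C \<phi> \<notin> lab (hd_hist h)"
  shows "\<exists>h'. is_hist (canon R) h' \<and> hist_equiv (canon R) C h h' \<and> \<phi> \<notin> lab (hd_hist h')"
proof -
  let ?X = "lab (hd_hist h)"
  have hw: "hd_hist h \<in> Wc R" using hist_states[OF h] by blast
  have mX: "mcs ?X" using Wc_mcs R hw by blast
  obtain Y where Y: "insert (Neg \<phi>) {\<chi>. K C \<chi> \<in> ?X} \<subseteq> Y" "mcs Y"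
    using lindenbaum K_witness[OF mX nK] by blast
  have nY: "\<phi> \<notin> Y" using Y mcs_neg by blast
  show ?thesis
  proof (cases "C = {}")
    case True
    have "{\<chi>. K {} \<chi> \<in> lab [({},R)]} \<subseteq> Y"
      using Y K_empty_global[OF R hw] True by auto
    then have "[({},R)] @ [({},Y)] \<in> Wc R" using Wc.ext[OF Wc.root] Y by blast
    then have "is_hist (canon R) ([({},R),({},Y)], [])" by (simp add: is_hist_def)
    moreover have "hist_equiv (canon R) C h ([({},R),({},Y)], [])"
      using True by (simp add: hist_equiv_def)
    ultimately show ?thesis using nY by (intro exI[of _ "([({},R),({},Y)], [])"]) simp
  next
    case False
    show ?thesis
    proof (cases "snd h" rule: rev_exhaust)
      case Nil
      let ?w = "fst h @ [(C,Y)]"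
      have hd: "hd_hist h = fst h" using Nil by (simp add: hd_hist_def)
      have f: "fst h \<in> Wc R" using hist_states[OF h] by blast
      have w: "?w \<in> Wc R" using Wc.ext[OF f Y(2)] Y hd by auto
      have "is_hist (canon R) (?w, [])" using w by (simp add: is_hist_def)
      moreover have "hist_equiv (canon R) C h (?w, [])"
        unfolding hist_equiv_def hist_equiv_agent_def
      proof (intro ballI conjI)
        fix a assume a: "a \<in> C"
        have "fst h \<noteq> [] \<and> fst h = fst h @ [] \<and> ?w = fst h @ [(C,Y)] \<and>
           (\<forall>x\<in>set ([]::('a set \<times> ('a,'p) fm set) list). a \<in> fst x) \<and> (\<forall>x\<in>set [(C,Y)]. a \<in> fst x)"
          using a Wc_ne[OF f] by simp
        then show "(fst h, fst (?w, [])) \<in> Sim (canon R) a"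
          unfolding canon_simps simc_def using f w by (simp only: fst_conv) blast
      qed (use Nil in auto)
      ultimately show ?thesis using nY by (intro exI[of _ "(?w, [])"]) simp
    next
      case (snoc xs x)
      obtain sn wn where x: "x = (sn, wn)" by fastforce
      let ?w0 = "fst h"
      let ?wp = "hd_hist (?w0, xs)"
      have hh: "hd_hist h = wn" using snoc x by (simp add: hd_hist_def)
      have so: "steps_ok (canon R) ?w0 (xs @ [(sn,wn)])" using h snoc x by (simp add: is_hist_def)
      then have so1: "steps_ok (canon R) ?w0 xs" and mech: "(?wp, sn, wn) \<in> mechc R"
        by (simp_all add: steps_ok_append)
      have wp: "?wp \<in> Wc R" and wn: "wn \<in> Wc R" using mech by (auto simp: mechc_def)
      have mp: "mcs (lab ?wp)" using Wc_mcs R wp by blast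
      have reqn: "req (lab ?wp) sn \<subseteq> lab wn" using mech by (simp add: mechc_def)
      define s' where "s' = (\<lambda>a. if a \<in> C then sn a else Bot)"
      let ?w' = "wn @ [(C,Y)]"
      have w': "?w' \<in> Wc R" using Wc.ext[OF wn Y(2)] Y hh by auto
      have "req (lab ?wp) s' \<subseteq> Y"
      proof
        fix \<chi> assume "\<chi> \<in> req (lab ?wp) s'"
        then obtain D \<psi> where D: "\<chi> = kv D \<psi>" "H D \<psi> \<in> lab ?wp" "\<forall>a\<in>D. s' a = H D \<psi>"
          unfolding req_def good_def by auto
        show "\<chi> \<in> Y"
        proof (cases "D = {}")
          case True
          have "H {} (K C \<psi>) \<in> lab ?wp" using H_PR[OF mp] D True False by blast
          then have "({}, K C \<psi>) \<in> good (lab ?wp) sn" by (simp add: good_def)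
          then have "kv {} (K C \<psi>) \<in> req (lab ?wp) sn" unfolding req_def by force
          then have "K C \<psi> \<in> lab wn" using reqn by (auto simp: kv_def)
          then show ?thesis using Y True D hh by (auto simp: kv_def)
        next
          case DF: False
          have DC: "D \<subseteq> C"
          proof
            fix a assume "a \<in> D"
            show "a \<in> C"
            proof (rule ccontr)
              assume "a \<notin> C"
              then have "s' a = Bot" by (simp add: s'_def)
              then show False using D \<open>a \<in> D\<close> by (simp add: Bot_def)
            qed
          qed
          have "\<forall>a\<in>D. sn a = H D \<psi>"
          proof
            fix a assume aD: "a \<in> D"
            then have "a \<in> C" using DC by blast
            moreover have "s' a = H D \<psi>" using D(3) aD by blast
            ultimately show "sn a = H D \<psi>" by (simp add: s'_def)
          qed
          then have "(D, \<psi>) \<in> good (lab ?wp) sn" using D by (simp add: good_def)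
          then have "kv D \<psi> \<in> req (lab ?wp) sn" unfolding req_def by force
          then have "K D \<psi> \<in> lab wn" using reqn DF by (auto simp: kv_def)
          then have "K C (K D \<psi>) \<in> lab wn" using K_4 K_mono mX hh DC by metis
          then show ?thesis using Y DF D hh by (auto simp: kv_def)
        qed
      qed
      then have mech': "(?wp, s', ?w') \<in> mechc R" using wp w' by (simp add: mechc_def)
      let ?h' = "(?w0, xs @ [(s', ?w')])"
      have ih': "is_hist (canon R) ?h'"
        using h so1 mech' by (simp add: is_hist_def steps_ok_append)
      have st: "\<forall>y\<in>set xs. snd y \<in> Wc R" using hist_states(2)[OF h] snoc by auto
      have eq: "hist_equiv (canon R) C h ?h'"
        unfolding hist_equiv_def hist_equiv_agent_def
      proof (intro ballI conjI allI impI)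
        fix a assume a: "a \<in> C"
        show "length (snd h) = length (snd ?h')" using snoc by simp
        show "(fst h, fst ?h') \<in> Sim (canon R) a" using simc_refl hist_states(1)[OF h] by simp
        fix i assume i: "i < length (snd h)"
        show "(snd (snd h ! i), snd (snd ?h' ! i)) \<in> Sim (canon R) a"
        proof (cases "i < length xs")
          case True
          then have "snd (xs ! i) \<in> Wc R" using st by simp
          then show ?thesis using snoc True simc_refl by (simp add: nth_append)
        next
          case False
          then have "i = length xs" using i snoc by simp
          moreover have "(wn, ?w') \<in> simc R a"
          proof -
            have "wn \<noteq> [] \<and> wn = wn @ [] \<and> ?w' = wn @ [(C,Y)] \<and>
              (\<forall>x\<in>set ([]::('a set \<times> ('a,'p) fm set) list). a \<in> fst x) \<and> (\<forall>x\<in>set [(C,Y)]. a \<in> fst x)"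
              using a Wc_ne[OF wn] by simp
            then show ?thesis unfolding simc_def using wn w' by blast
          qed
          ultimately show ?thesis using snoc x by (simp add: nth_append)
        qed
        show "fst (snd h ! i) a = fst (snd ?h' ! i) a"
        proof (cases "i < length xs")
          case True
          then show ?thesis using snoc by (simp add: nth_append)
        next
          case False
          then have "i = length xs" using i snoc by simp
          then show ?thesis using snoc x a by (simp add: nth_append s'_def)
        qed
      qed
      have "hd_hist ?h' = ?w'" by (simp add: hd_hist_def)
      then show ?thesis using ih' eq nY by (intro exI[of _ ?h']) simp
    qed
  qed
qed

lemma truth:
  assumes R: "mcs R"
  shows "is_hist (canon R) h \<Longrightarrow> sat (canon R) h \<phi> = (\<phi> \<in> lab (hd_hist h))"
proof (induction \<phi> arbitrary: h)
  case (Prop p)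
  then show ?case using hist_states[OF Prop] by simp
next
  case (Neg \<phi>)
  have "mcs (lab (hd_hist h))" using Wc_mcs[OF R hist_states(3)[OF Neg(2)]] .
  then show ?case using mcs_neg[of "lab (hd_hist h)" \<phi>] Neg by simp
next
  case (Imp \<phi>1 \<phi>2)
  have "mcs (lab (hd_hist h))" using Wc_mcs[OF R hist_states(3)[OF Imp(3)]] .
  then have "(Imp \<phi>1 \<phi>2 \<in> lab (hd_hist h)) = (\<phi>1 \<in> lab (hd_hist h) \<longrightarrow> \<phi>2 \<in> lab (hd_hist h))"
    by (rule mcs_imp)
  then show ?case using Imp.IH[OF Imp.prems] by simp
next
  case (K C \<phi>)
  show ?case
  proof
    assume "sat (canon R) h (K C \<phi>)"
    then have all0: "\<forall>h'. is_hist (canon R) h' \<and> hist_equiv (canon R) C h h' \<longrightarrow> sat (canon R) h' \<phi>"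
      by (simp only: sat.simps)
    have all: "\<forall>h'. is_hist (canon R) h' \<and> hist_equiv (canon R) C h h' \<longrightarrow> \<phi> \<in> lab (hd_hist h')"
    proof (intro allI impI)
      fix h' assume "is_hist (canon R) h' \<and> hist_equiv (canon R) C h h'"
      then show "\<phi> \<in> lab (hd_hist h')" using all0 K.IH[of h'] by blast
    qed
    show "K C \<phi> \<in> lab (hd_hist h)"
    proof (rule ccontr)
      assume "K C \<phi> \<notin> lab (hd_hist h)"
      then show False using K_back[OF R K.prems] all by blast
    qed
  next
    assume kin: "K C \<phi> \<in> lab (hd_hist h)"
    have "\<forall>h'. is_hist (canon R) h' \<and> hist_equiv (canon R) C h h' \<longrightarrow> sat (canon R) h' \<phi>"
    proof (intro allI impI)
      fix h' assume a: "is_hist (canon R) h' \<and> hist_equiv (canon R) C h h'"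
      then have "\<phi> \<in> lab (hd_hist h')" using K_fwd[OF R K.prems _ _ kin] by blast
      then show "sat (canon R) h' \<phi>" using K.IH[of h'] a by blast
    qed
    then show "sat (canon R) h (K C \<phi>)" by (simp only: sat.simps)
  qed
next
  case (H C \<phi>)
  let ?X = "lab (hd_hist h)"
  have hw: "hd_hist h \<in> Wc R" using hist_states[OF H.prems] by blast
  have mX: "mcs ?X" using Wc_mcs[OF R hw] .
  show ?case
  proof (rule iffI)
    assume sat: "sat (canon R) h (H C \<phi>)"
    show "H C \<phi> \<in> ?X"
    proof (rule ccontr)
      assume nH: "H C \<phi> \<notin> ?X"
      have "\<exists>s. (\<forall>a\<in>C. s a \<in> Dom (canon R)) \<and> (\<forall>h' s' w'. is_hist (canon R) (ext_hist h' s' w') \<and> hist_equiv (canon R) C h h' \<and>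
          (\<forall>a\<in>C. s a = s' a) \<longrightarrow> sat (canon R) (ext_hist h' s' w') \<phi>)"
        using sat by (simp only: sat.simps)
      then obtain s where s0: "(\<forall>a\<in>C. s a \<in> Dom (canon R)) \<and> (\<forall>h' s' w'. is_hist (canon R) (ext_hist h' s' w') \<and> hist_equiv (canon R) C h h' \<and>
          (\<forall>a\<in>C. s a = s' a) \<longrightarrow> sat (canon R) (ext_hist h' s' w') \<phi>)"
        by (rule exE)
      then have s: "\<forall>h' s' w'. is_hist (canon R) (ext_hist h' s' w') \<and> hist_equiv (canon R) C h h' \<and>
          (\<forall>a\<in>C. s a = s' a) \<longrightarrow> sat (canon R) (ext_hist h' s' w') \<phi>"
        by (rule conjunct2)
      define s' where "s' = (\<lambda>a. if a \<in> C then s a else Bot)"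
      have "\<forall>a. a \<notin> C \<longrightarrow> s' a = Bot" by (simp add: s'_def)
      then have "consistent (insert (Neg \<phi>) (req ?X s'))" by (rule H_witness[OF mX nH])
      then obtain Y where Y: "insert (Neg \<phi>) (req ?X s') \<subseteq> Y" "mcs Y"
        using lindenbaum by blast
      let ?w' = "[({},R),({},Y)]"
      have rq: "req ?X s' \<subseteq> Y" using Y(1) by blast
      have r: "?w' \<in> Wc R \<and> (hd_hist h, s', ?w') \<in> mechc R"
        using reach[OF R hw Y(2) rq] .
      have ih: "is_hist (canon R) (ext_hist h s' ?w')" using r H.prems by (simp add: is_hist_ext)
      have agree: "\<forall>a\<in>C. s a = s' a" by (simp add: s'_def)
      have "sat (canon R) (ext_hist h s' ?w') \<phi>"
        using s[rule_format, OF conjI[OF ih conjI[OF hist_equiv_refl[OF H.prems] agree]]] .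
      then have "\<phi> \<in> lab (hd_hist (ext_hist h s' ?w'))" using H.IH[OF ih] by blast
      then have "\<phi> \<in> Y" by simp
      then show False using Y mcs_neg by blast
    qed
  next
    assume hin: "H C \<phi> \<in> ?X"
    have "K C (H C \<phi>) \<in> ?X" using H_SPI mX hin by blast
    show "sat (canon R) h (H C \<phi>)"
      unfolding sat.simps
    proof (intro exI[of _ "\<lambda>a. H C \<phi>"] conjI allI impI)
      show "\<forall>a\<in>C. H C \<phi> \<in> Dom (canon R)" by simp
      fix h' s' w'
      assume a: "is_hist (canon R) (ext_hist h' s' w') \<and> hist_equiv (canon R) C h h' \<and> (\<forall>a\<in>C. H C \<phi> = s' a)"
      have ie: "is_hist (canon R) (ext_hist h' s' w')" using a by (rule conjunct1)
      have eqv: "hist_equiv (canon R) C h h'" using a by (rule conjunct1[OF conjunct2])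
      have "is_hist (canon R) h' \<and> (hd_hist h', s', w') \<in> Mech (canon R)"
        using ie by (simp only: is_hist_ext)
      then have h': "is_hist (canon R) h'" and m: "(hd_hist h', s', w') \<in> mechc R"
        by simp_all
      have "H C \<phi> \<in> lab (hd_hist h')" using K_fwd[OF R H.prems h' eqv] \<open>K C (H C \<phi>) \<in> ?X\<close> by blast
      moreover have "\<forall>b\<in>C. s' b = H C \<phi>" using a by simp
      ultimately have "(C, \<phi>) \<in> good (lab (hd_hist h')) s'" by (simp add: good_def)
      then have "kv C \<phi> \<in> req (lab (hd_hist h')) s'" unfolding req_def by force
      moreover have "req (lab (hd_hist h')) s' \<subseteq> lab w'" "w' \<in> Wc R" using m by (simp_all add: mechc_def)
      ultimately have "kv C \<phi> \<in> lab w'" by blast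
      moreover have "mcs (lab w')" using Wc_mcs[OF R \<open>w' \<in> Wc R\<close>] .
      ultimately have "\<phi> \<in> lab w'" using kv_T by blast
      moreover have "sat (canon R) (ext_hist h' s' w') \<phi> = (\<phi> \<in> lab (hd_hist (ext_hist h' s' w')))"
        using H.IH[of "ext_hist h' s' w'"] a by blast
      ultimately show "sat (canon R) (ext_hist h' s' w') \<phi>" by simp
    qed
  qed
qed

theorem theorem2:
  fixes f :: "('a, 'p) fm"
  assumes "valid f"
  shows "derivable f"
proof (rule ccontr)
  assume nd: "\<not> derivable f"
  have "consistent (insert (Neg f) {})"
    by (rule witness_consistent) (use nd in auto)
  then obtain R where R: "Neg f \<in> R" "mcs R" using lindenbaum by blast
  let ?h = "([({},R)], []) :: ('a,'p) univ_state \<times> (('a \<Rightarrow> ('a,'p) fm) \<times> ('a,'p) univ_state) list"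
  have h: "is_hist (canon R) ?h" by (simp add: is_hist_def Wc.root)
  have v: "\<forall>E :: (('a, 'p) univ_state, 'a, ('a, 'p) fm, 'p) ets.
        is_ets E \<and> regular E \<longrightarrow> (\<forall>h. is_hist E h \<longrightarrow> sat E h f)"
    using assms unfolding valid_def .
  have "sat (canon R) ?h f"
    using v[rule_format, of "canon R" ?h] canon_ets[OF R(2)] canon_regular[OF R(2)] h by blast
  then have "f \<in> R" using truth[OF R(2) h] by simp
  then show False using R mcs_neg by blast
qed

end
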